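(* Let $n,g$ be integers with $0\leq g\leq \lfloor \frac{n-3}{2}\rfloor$, and let $G$ be a connected graph of order $n$. Then $G$ has an $R_g$-cutset with $\kappa_g(G)=2$ if and only if one of the following holds: (1) $\kappa(G)=2$ and there exist two vertices $u,v$ such that $G-\{u,v\}$ is disconnected and every connected component of $G-\{u,v\}$ has at least $g+1$ vertices; (2) $\kappa(G)=1$, $g\geq 1$, and both (a) for every cut vertex $u$ of $G$, some connected component of $G-u$ has at most $g$ vertices, and (b) either there exists a cut vertex $v$ such that $G-v$ has at least $3$ connected components, one of which consists of a single vertex and each of the others has at least $g+1$ vertices; or there exist two vertices $x,y$, neither of which is a cut vertex of $G$, such that $G-\{x,y\}$ is disconnected and every connected component of $G-\{x,y\}$ has at least $g+1$ vertices.
   Context: All graphs are finite and simple. $\kappa(G)$ denotes the usual vertex connectivity. A cut vertex of a connected graph $G$ is a vertex $v$ with $G-v$ disconnected. A set $S\subseteq V(G)$ is a cutset if $G-S$ is disconnected. For a non-negative integer $g$, a cutset $S$ is an $R_g$-cutset if every connected component of $G-S$ has at least $g+1$ vertices. If $G$ has at least one $R_g$-cutset, the $g$-extra connectivity $\kappa_g(G)$ is the minimum cardinality of an $R_g$-cutset of $G$. *)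

theory Defs
  imports Main
begin

definition simple_graph :: "'a set \<Rightarrow> ('a \<Rightarrow> 'a \<Rightarrow> bool) \<Rightarrow> bool" where
  "simple_graph V E \<longleftrightarrow> finite V \<and> (\<forall>x y. E x y \<longrightarrow> x \<in> V \<and> y \<in> V)
     \<and> (\<forall>x y. E x y \<longrightarrow> E y x) \<and> (\<forall>x. \<not> E x x)"

definition reach :: "'a set \<Rightarrow> ('a \<Rightarrow> 'a \<Rightarrow> bool) \<Rightarrow> 'a \<Rightarrow> 'a \<Rightarrow> bool" where
  "reach W E x y \<longleftrightarrow> x \<in> W \<and> y \<in> W \<and> (\<lambda>a b. a \<in> W \<and> b \<in> W \<and> E a b)\<^sup>*\<^sup>* x y"

definition connected_on :: "'a set \<Rightarrow> ('a \<Rightarrow> 'a \<Rightarrow> bool) \<Rightarrow> bool" where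
  "connected_on W E \<longleftrightarrow> W \<noteq> {} \<and> (\<forall>x\<in>W. \<forall>y\<in>W. reach W E x y)"

definition disconnected_on :: "'a set \<Rightarrow> ('a \<Rightarrow> 'a \<Rightarrow> bool) \<Rightarrow> bool" where
  "disconnected_on W E \<longleftrightarrow> (\<exists>x\<in>W. \<exists>y\<in>W. \<not> reach W E x y)"

definition components :: "'a set \<Rightarrow> ('a \<Rightarrow> 'a \<Rightarrow> bool) \<Rightarrow> 'a set set" where
  "components W E = {{y. reach W E x y} | x. x \<in> W}"

definition cut_vertex :: "'a set \<Rightarrow> ('a \<Rightarrow> 'a \<Rightarrow> bool) \<Rightarrow> 'a \<Rightarrow> bool" where
  "cut_vertex V E v \<longleftrightarrow> v \<in> V \<and> disconnected_on (V - {v}) E"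

definition cutset :: "'a set \<Rightarrow> ('a \<Rightarrow> 'a \<Rightarrow> bool) \<Rightarrow> 'a set \<Rightarrow> bool" where
  "cutset V E S \<longleftrightarrow> S \<subseteq> V \<and> disconnected_on (V - S) E"

definition Rg_cutset :: "'a set \<Rightarrow> ('a \<Rightarrow> 'a \<Rightarrow> bool) \<Rightarrow> nat \<Rightarrow> 'a set \<Rightarrow> bool" where
  "Rg_cutset V E g S \<longleftrightarrow> cutset V E S \<and> (\<forall>C \<in> components (V - S) E. card C \<ge> g + 1)"

definition kappa :: "'a set \<Rightarrow> ('a \<Rightarrow> 'a \<Rightarrow> bool) \<Rightarrow> nat" where
  "kappa V E = (LEAST k. \<exists>S. S \<subseteq> V \<and> card S = k \<and>
                   (disconnected_on (V - S) E \<or> card (V - S) \<le> 1))"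

text \<open>g-extra connectivity (meaningful when some R_g-cutset exists).\<close>
definition kappa_g :: "'a set \<Rightarrow> ('a \<Rightarrow> 'a \<Rightarrow> bool) \<Rightarrow> nat \<Rightarrow> nat" where
  "kappa_g V E g = (LEAST k. \<exists>S. Rg_cutset V E g S \<and> card S = k)"

end

theory Submission
  imports Defs
begin

lemma reach_mono: "W' \<subseteq> W \<Longrightarrow> reach W' E x y \<Longrightarrow> reach W E x y"
  unfolding reach_def
proof (elim conjE, intro conjI)
  assume "W' \<subseteq> W" "x \<in> W'" "y \<in> W'" and r: "(\<lambda>a b. a \<in> W' \<and> b \<in> W' \<and> E a b)\<^sup>*\<^sup>* x y"
  then show "x \<in> W" "y \<in> W" by auto
  from r show "(\<lambda>a b. a \<in> W \<and> b \<in> W \<and> E a b)\<^sup>*\<^sup>* x y"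
    by (induction rule: rtranclp_induct) (use \<open>W' \<subseteq> W\<close> in \<open>auto intro: rtranclp.rtrancl_into_rtrancl\<close>)
qed

lemma reach_refl: "x \<in> W \<Longrightarrow> reach W E x x"
  unfolding reach_def by auto

lemma reach_sym:
  assumes sym: "\<forall>a b. E a b \<longrightarrow> E b a" and "reach W E x y" shows "reach W E y x"
proof -
  have "(\<lambda>a b. a \<in> W \<and> b \<in> W \<and> E a b)\<^sup>*\<^sup>* x y" "x \<in> W" "y \<in> W" using assms(2) unfolding reach_def by auto
  moreover have "(\<lambda>a b. a \<in> W \<and> b \<in> W \<and> E a b)\<^sup>*\<^sup>* y x"
    using calculation(1)
  proof (induction rule: rtranclp_induct)
    case base then show ?case by simp
  next
    case (step b c)
    then show ?case using sym by (auto intro: converse_rtranclp_into_rtranclp)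
  qed
  ultimately show ?thesis unfolding reach_def by auto
qed

lemma reach_trans: "reach W E x y \<Longrightarrow> reach W E y z \<Longrightarrow> reach W E x z"
  unfolding reach_def using rtranclp_trans[of "\<lambda>a b. a \<in> W \<and> b \<in> W \<and> E a b" x y z] by blast

lemma comp_eq:
  assumes sym: "\<forall>a b. E a b \<longrightarrow> E b a" and "reach W E x z"
  shows "{y. reach W E z y} = {y. reach W E x y}"
proof
  show "{y. reach W E z y} \<subseteq> {y. reach W E x y}" using assms(2) reach_trans[of W E x z] by auto
  have "reach W E z x" using reach_sym[OF sym assms(2)] .
  then show "{y. reach W E x y} \<subseteq> {y. reach W E z y}" using reach_trans[of W E z x] by auto
qed

lemma comp_disj:
  assumes sym: "\<forall>a b. E a b \<longrightarrow> E b a" and "C \<in> components W E" "D \<in> components W E" "z \<in> C" "z \<in> D"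
  shows "C = D"
proof -
  obtain c where c: "C = {y. reach W E c y}" using assms(2) unfolding components_def by auto
  obtain d where d: "D = {y. reach W E d y}" using assms(3) unfolding components_def by auto
  show ?thesis using comp_eq[OF sym, of W c z] comp_eq[OF sym, of W d z] c d assms(4,5) by auto
qed

lemma comp_sub: "C \<in> components W E \<Longrightarrow> C \<subseteq> W"
  unfolding components_def reach_def by auto

lemma comp_ne: "C \<in> components W E \<Longrightarrow> \<exists>c\<in>W. c \<in> C \<and> C = {y. reach W E c y}"
  unfolding components_def using reach_refl by fastforce

lemma comp_card: "finite W \<Longrightarrow> C \<in> components W E \<Longrightarrow> card C \<ge> 1"
proof -
  assume f: "finite W" and c: "C \<in> components W E"
  then have "finite C" using comp_sub[OF c] finite_subset by auto
  moreover have "C \<noteq> {}" using comp_ne[OF c] by auto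
  ultimately show ?thesis by (simp add: Suc_leI card_gt_0_iff)
qed

lemma comps_finite: "finite W \<Longrightarrow> finite (components W E)"
proof -
  assume "finite W"
  moreover have "components W E \<subseteq> Pow W" using comp_sub by auto
  ultimately show ?thesis using finite_subset by (metis finite_Pow_iff)
qed

lemma restrict:
  assumes "x \<in> W'" "W' \<subseteq> W" "{y. reach W E x y} \<subseteq> W'"
  shows "{y. reach W' E x y} = {y. reach W E x y}"
proof
  show "{y. reach W' E x y} \<subseteq> {y. reach W E x y}" using reach_mono[OF assms(2)] by auto
  show "{y. reach W E x y} \<subseteq> {y. reach W' E x y}"
  proof
    fix y assume "y \<in> {y. reach W E x y}"
    then have r: "(\<lambda>a b. a \<in> W \<and> b \<in> W \<and> E a b)\<^sup>*\<^sup>* x y" unfolding reach_def by auto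
    have "(\<lambda>a b. a \<in> W' \<and> b \<in> W' \<and> E a b)\<^sup>*\<^sup>* x y \<and> y \<in> W'"
      using r
    proof (induction rule: rtranclp_induct)
      case base then show ?case using assms(1) by simp
    next
      case (step b c)
      have "reach W E x c" unfolding reach_def using step assms by (auto intro: rtranclp.rtrancl_into_rtrancl)
      then have "c \<in> W'" using assms(3) by auto
      then show ?case using step by (auto intro: rtranclp.rtrancl_into_rtrancl)
    qed
    then show "y \<in> {y. reach W' E x y}" unfolding reach_def using assms(1) by auto
  qed
qed

lemma comp_restrict:
  assumes "C \<in> components W E" "C \<subseteq> W'" "W' \<subseteq> W"
  shows "C \<in> components W' E"
proof -
  obtain c where c: "c \<in> W" "c \<in> C" "C = {y. reach W E c y}" using comp_ne[OF assms(1)] by auto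
  have "{y. reach W' E c y} = C" using restrict[of c W' W E] c assms by auto
  then show ?thesis using c assms unfolding components_def by auto
qed


lemma pair_cut_case:
  assumes sym: "\<forall>a b. E a b \<longrightarrow> E b a" and fin: "finite V"
    and xy: "x \<in> V" "y \<in> V" "x \<noteq> y"
    and rg: "Rg_cutset V E g {x, y}" and cx: "cut_vertex V E x"
    and no: "\<not> Rg_cutset V E g {x}"
  shows "card (components (V - {x}) E) \<ge> 3 \<and> (\<exists>C\<in>components (V - {x}) E. card C = 1 \<and>
           (\<forall>C'\<in>components (V - {x}) E. C' \<noteq> C \<longrightarrow> card C' \<ge> g + 1))"
proof -
  define W where "W = V - {x}"
  define W' where "W' = V - {x, y}"
  have WW: "W' \<subseteq> W" unfolding W_def W'_def by auto
  have finW: "finite W" using fin unfolding W_def by auto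
  have yW: "y \<in> W" using xy unfolding W_def by auto
  define D where "D = {z. reach W E y z}"
  have DC: "D \<in> components W E" unfolding D_def components_def using yW by auto
  have yD: "y \<in> D" unfolding D_def using reach_refl[OF yW] by auto
  have rgW': "\<forall>C\<in>components W' E. card C \<ge> g + 1" using rg unfolding Rg_cutset_def W'_def by auto
  have other: "\<forall>C\<in>components W E. C \<noteq> D \<longrightarrow> card C \<ge> g + 1"
  proof (intro ballI impI)
    fix C assume C: "C \<in> components W E" "C \<noteq> D"
    have "y \<notin> C" using comp_disj[OF sym C(1) DC] yD C(2) by auto
    then have "C \<subseteq> W'" using comp_sub[OF C(1)] unfolding W_def W'_def by auto
    then have "C \<in> components W' E" using comp_restrict[OF C(1) _ WW] by auto
    then show "card C \<ge> g + 1" using rgW' by auto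
  qed
  have Dy: "D = {y}"
  proof (rule ccontr)
    assume "D \<noteq> {y}"
    then obtain z where z: "z \<in> D" "z \<noteq> y" using yD by auto
    have zW': "z \<in> W'" using z comp_sub[OF DC] unfolding W_def W'_def by auto
    define K where "K = {w. reach W' E z w}"
    have KC: "K \<in> components W' E" unfolding K_def components_def using zW' by auto
    have ryz: "reach W E y z" using z unfolding D_def by auto
    have "K \<subseteq> D"
    proof
      fix w assume "w \<in> K"
      then have "reach W E z w" using reach_mono[OF WW] unfolding K_def by auto
      then show "w \<in> D" using reach_trans[OF ryz] unfolding D_def by auto
    qed
    moreover have "finite D" using comp_sub[OF DC] finW finite_subset by auto
    ultimately have "card D \<ge> card K" by (simp add: card_mono)
    then have "card D \<ge> g + 1" using rgW' KC by fastforce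
    then have "\<forall>C\<in>components W E. card C \<ge> g + 1" using other by auto
    moreover have "cutset V E {x}" using cx xy unfolding cut_vertex_def cutset_def by auto
    ultimately have "Rg_cutset V E g {x}" unfolding Rg_cutset_def W_def by auto
    then show False using no by auto
  qed
  have three: "card (components W E) \<ge> 3"
  proof -
    obtain a b where ab: "a \<in> W'" "b \<in> W'" "\<not> reach W' E a b"
      using rg unfolding Rg_cutset_def cutset_def disconnected_on_def W'_def by auto
    define A where "A = {z. reach W E a z}"
    define B where "B = {z. reach W E b z}"
    have aW: "a \<in> W" "b \<in> W" using ab WW by auto
    have AC: "A \<in> components W E" unfolding A_def components_def using aW by auto
    have BC: "B \<in> components W E" unfolding B_def components_def using aW by auto
    have aA: "a \<in> A" unfolding A_def using reach_refl[OF aW(1)] by auto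
    have bB: "b \<in> B" unfolding B_def using reach_refl[OF aW(2)] by auto
    have ay: "a \<noteq> y" "b \<noteq> y" using ab unfolding W'_def by auto
    have AD: "A \<noteq> D" using aA Dy ay by auto
    have BD: "B \<noteq> D" using bB Dy ay by auto
    have "y \<notin> A" using comp_disj[OF sym AC DC] yD AD by auto
    then have "A \<subseteq> W'" using comp_sub[OF AC] unfolding W_def W'_def by auto
    then have A': "{z. reach W' E a z} = A" using restrict[of a W' W E] ab WW unfolding A_def by auto
    have AB: "A \<noteq> B"
    proof
      assume "A = B"
      then have "b \<in> A" using bB by auto
      then show False using A' ab(3) by auto
    qed
    have "{D, A, B} \<subseteq> components W E" using DC AC BC by auto
    moreover have "card {D, A, B} = 3" using AD BD AB by auto
    ultimately show ?thesis using comps_finite[OF finW] by (metis card_mono)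
  qed
  have "card D = 1" using Dy by simp
  then show ?thesis using three other DC unfolding W_def by blast
qed

lemma leaf_case:
  assumes sym: "\<forall>a b. E a b \<longrightarrow> E b a" and fin: "finite V"
    and cv: "cut_vertex V E v" and three: "card (components (V - {v}) E) \<ge> 3"
    and C: "C \<in> components (V - {v}) E" "card C = 1"
    and oth: "\<forall>C'\<in>components (V - {v}) E. C' \<noteq> C \<longrightarrow> card C' \<ge> g + 1"
  shows "\<exists>S. Rg_cutset V E g S \<and> card S = 2"
proof -
  define W where "W = V - {v}"
  obtain w where Cw: "C = {w}" using C(2) card_1_singletonE by blast
  define W' where "W' = V - {v, w}"
  have WW: "W' \<subseteq> W" unfolding W_def W'_def by auto
  have finW: "finite W" using fin unfolding W_def by auto
  have CC: "C \<in> components W E" using C unfolding W_def by auto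
  have wW: "w \<in> W" using comp_sub[OF CC] Cw by auto
  have fc: "finite (components W E)" using comps_finite[OF finW] .
  have "card (components W E - {C}) \<ge> 2" using three CC fc unfolding W_def by (simp add: card_Diff_singleton)
  then have "components W E - {C} \<noteq> {}" by (metis card.empty not_numeral_le_zero)
  then obtain C1 where C1: "C1 \<in> components W E" "C1 \<noteq> C" by blast
  have "card (components W E - {C} - {C1}) \<ge> 1" using \<open>card (components W E - {C}) \<ge> 2\<close> C1 fc
    by (simp add: card_Diff_singleton)
  then have "components W E - {C} - {C1} \<noteq> {}" by (metis card.empty not_one_le_zero)
  then obtain C2 where C2: "C2 \<in> components W E" "C2 \<noteq> C" "C2 \<noteq> C1" by blast
  obtain a where a: "a \<in> W" "a \<in> C1" "C1 = {y. reach W E a y}" using comp_ne[OF C1(1)] by auto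
  obtain b where b: "b \<in> W" "b \<in> C2" "C2 = {y. reach W E b y}" using comp_ne[OF C2(1)] by auto
  have aw: "a \<noteq> w" using comp_disj[OF sym C1(1) CC] a(2) Cw C1(2) by auto
  have bw: "b \<noteq> w" using comp_disj[OF sym C2(1) CC] b(2) Cw C2(2) by auto
  have abW': "a \<in> W'" "b \<in> W'" using a b aw bw unfolding W_def W'_def by auto
  have nr: "\<not> reach W' E a b"
  proof
    assume "reach W' E a b"
    then have "reach W E a b" using reach_mono[OF WW] by auto
    then have "b \<in> C1" using a(3) by auto
    then show False using comp_disj[OF sym C1(1) C2(1)] b(2) C2(3) by auto
  qed
  have comps: "\<forall>K\<in>components W' E. card K \<ge> g + 1"
  proof
    fix K assume K: "K \<in> components W' E"
    obtain k where k: "k \<in> W'" "K = {y. reach W' E k y}" using K unfolding components_def by auto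
    define A where "A = {y. reach W E k y}"
    have kW: "k \<in> W" using k WW by auto
    have AC: "A \<in> components W E" unfolding A_def components_def using kW by auto
    have kA: "k \<in> A" unfolding A_def using reach_refl[OF kW] by auto
    have kw: "k \<noteq> w" using k unfolding W'_def by auto
    have AnC: "A \<noteq> C" using kA kw Cw by auto
    have "w \<notin> A" using comp_disj[OF sym AC CC] Cw AnC by auto
    then have "A \<subseteq> W'" using comp_sub[OF AC] unfolding W_def W'_def by auto
    then have "K = A" using restrict[of k W' W E] k WW unfolding A_def by auto
    then show "card K \<ge> g + 1" using oth AC AnC unfolding W_def by auto
  qed
  have vV: "v \<in> V" using cv unfolding cut_vertex_def by auto
  have wv: "w \<noteq> v" using wW unfolding W_def by auto
  have "Rg_cutset V E g {v, w}"
    unfolding Rg_cutset_def cutset_def disconnected_on_def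
    using vV wW comps abW' nr unfolding W_def W'_def by blast
  moreover have "card {v, w} = 2" using wv by auto
  ultimately show ?thesis by blast
qed


lemma kappa_facts:
  assumes fin: "finite V" and con: "connected_on V E" and n3: "card V \<ge> 3"
  shows "kappa V E = 1 \<longleftrightarrow> (\<exists>u. cut_vertex V E u)"
    and "\<not> (\<exists>u. cut_vertex V E u) \<Longrightarrow> u \<in> V \<Longrightarrow> v \<in> V \<Longrightarrow> u \<noteq> v \<Longrightarrow>
         disconnected_on (V - {u, v}) E \<Longrightarrow> kappa V E = 2"
proof -
  define P where "P = (\<lambda>k. \<exists>S. S \<subseteq> V \<and> card S = k \<and>
                   (disconnected_on (V - S) E \<or> card (V - S) \<le> 1))"
  have kd: "kappa V E = (LEAST k. P k)" unfolding kappa_def P_def by simp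
  have Pn: "P (card V)" unfolding P_def by (rule exI[of _ V]) simp
  have P0: "\<not> P 0"
  proof
    assume "P 0"
    then obtain S where S: "S \<subseteq> V" "card S = 0" "disconnected_on (V - S) E \<or> card (V - S) \<le> 1"
      unfolding P_def by auto
    have "S = {}" using S fin finite_subset by fastforce
    then show False using S(3) con n3 unfolding disconnected_on_def connected_on_def by auto
  qed
  have P1: "P 1 \<longleftrightarrow> (\<exists>u. cut_vertex V E u)"
  proof
    assume "P 1"
    then obtain S where S: "S \<subseteq> V" "card S = 1" "disconnected_on (V - S) E \<or> card (V - S) \<le> 1"
      unfolding P_def by auto
    obtain u where u: "S = {u}" using S(2) card_1_singletonE by blast
    have "card (V - S) = card V - 1" using S(1,2) fin by (simp add: card_Diff_subset finite_subset)
    then have "disconnected_on (V - {u}) E" using S(3) n3 u by auto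
    then show "\<exists>u. cut_vertex V E u" using S(1) u unfolding cut_vertex_def by auto
  next
    assume "\<exists>u. cut_vertex V E u"
    then obtain u where "u \<in> V" "disconnected_on (V - {u}) E" unfolding cut_vertex_def by auto
    then show "P 1" unfolding P_def by (intro exI[of _ "{u}"]) auto
  qed
  have pk: "P (kappa V E)" using LeastI[of P, OF Pn] kd by simp
  have kne0: "kappa V E \<noteq> 0" using pk P0 by metis
  show "kappa V E = 1 \<longleftrightarrow> (\<exists>u. cut_vertex V E u)"
  proof
    assume "kappa V E = 1"
    then have "P 1" using LeastI[of P, OF Pn] kd by auto
    then show "\<exists>u. cut_vertex V E u" using P1 by auto
  next
    assume "\<exists>u. cut_vertex V E u"
    then have "P 1" using P1 by auto
    then have "kappa V E \<le> 1" using kd Least_le[of P 1] by auto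
    then show "kappa V E = 1" using kne0 by auto
  qed
  assume nc: "\<not> (\<exists>u. cut_vertex V E u)" and uv: "u \<in> V" "v \<in> V" "u \<noteq> v"
    and d: "disconnected_on (V - {u, v}) E"
  have "P 2" unfolding P_def using uv d by (intro exI[of _ "{u, v}"]) auto
  then have "kappa V E \<le> 2" using kd Least_le[of P 2] by auto
  moreover have "P (kappa V E)" using LeastI[of P, OF Pn] kd by auto
  moreover have "kappa V E \<noteq> 1" using pk P1 nc by metis
  ultimately show "kappa V E = 2" using kne0 by linarith
qed

theorem theorem4p1:
  fixes V :: "'a set" and E :: "'a \<Rightarrow> 'a \<Rightarrow> bool" and n g :: nat
  assumes "simple_graph V E"
    and "card V = n"
    and "int g \<le> (int n - 3) div 2"
    and "connected_on V E"
  shows "((\<exists>S. Rg_cutset V E g S) \<and> kappa_g V E g = 2) \<longleftrightarrow>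
    ((kappa V E = 2 \<and>
       (\<exists>u v. u \<in> V \<and> v \<in> V \<and> u \<noteq> v \<and> disconnected_on (V - {u, v}) E \<and>
              (\<forall>C \<in> components (V - {u, v}) E. card C \<ge> g + 1)))
     \<or>
     (kappa V E = 1 \<and> g \<ge> 1 \<and>
       (\<forall>u. cut_vertex V E u \<longrightarrow> (\<exists>C \<in> components (V - {u}) E. card C \<le> g)) \<and>
       ((\<exists>v. cut_vertex V E v \<and> card (components (V - {v}) E) \<ge> 3 \<and>
            (\<exists>C \<in> components (V - {v}) E. card C = 1 \<and>
               (\<forall>C' \<in> components (V - {v}) E. C' \<noteq> C \<longrightarrow> card C' \<ge> g + 1)))
        \<or>
        (\<exists>x y. x \<in> V \<and> y \<in> V \<and> x \<noteq> y \<and> \<not> cut_vertex V E x \<and> \<not> cut_vertex V E y \<and>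
               disconnected_on (V - {x, y}) E \<and>
               (\<forall>C \<in> components (V - {x, y}) E. card C \<ge> g + 1)))))"
    (is "?L \<longleftrightarrow> ?R")
proof -
  have fin: "finite V" and sym: "\<forall>a b. E a b \<longrightarrow> E b a"
    using assms(1) unfolding simple_graph_def by auto
  have n3: "card V \<ge> 3" using assms(2,3) by linarith
  have con: "connected_on V E" by fact
  note kf = kappa_facts[OF fin con n3]
  have rg0: "\<not> Rg_cutset V E g S" if "card S = 0" for S
  proof
    assume r: "Rg_cutset V E g S"
    then have "S \<subseteq> V" unfolding Rg_cutset_def cutset_def by auto
    then have "S = {}" using that fin finite_subset by fastforce
    then show False using r con unfolding Rg_cutset_def cutset_def disconnected_on_def connected_on_def by auto
  qed
  have rg1: "Rg_cutset V E g {u} \<longleftrightarrow> cut_vertex V E u \<and> (\<forall>C\<in>components (V - {u}) E. card C \<ge> g + 1)" for u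
    unfolding Rg_cutset_def cutset_def cut_vertex_def by auto
  show ?thesis
  proof
    assume L: ?L
    then have "\<exists>k S. Rg_cutset V E g S \<and> card S = k" by blast
    then have "\<exists>S. Rg_cutset V E g S \<and> card S = kappa_g V E g"
      unfolding kappa_g_def by (rule LeastI_ex[of "\<lambda>k. \<exists>S. Rg_cutset V E g S \<and> card S = k"])
    then obtain S where S: "Rg_cutset V E g S" "card S = 2" using L by auto
    have minS: "2 \<le> card T" if "Rg_cutset V E g T" for T
    proof -
      have "(LEAST k. \<exists>S. Rg_cutset V E g S \<and> card S = k) \<le> card T"
        by (rule Least_le) (use that in blast)
      then show ?thesis using L unfolding kappa_g_def by simp
    qed
    have no1: "\<not> Rg_cutset V E g {u}" for u using minS[of "{u}"] by auto
    obtain x y where xy: "S = {x, y}" "x \<noteq> y" using card_2_iff[THEN iffD1, OF S(2)] by blast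
    have xyV: "x \<in> V" "y \<in> V" using S(1) xy unfolding Rg_cutset_def cutset_def by auto
    have dxy: "disconnected_on (V - {x, y}) E" "\<forall>C\<in>components (V - {x, y}) E. card C \<ge> g + 1"
      using S(1) xy unfolding Rg_cutset_def cutset_def by auto
    show ?R
    proof (cases "\<exists>u. cut_vertex V E u")
      case False
      then have "kappa V E = 2" using kf(2)[OF False xyV xy(2) dxy(1)] by simp
      have "kappa V E = 2 \<and> (\<exists>u v. u \<in> V \<and> v \<in> V \<and> u \<noteq> v \<and> disconnected_on (V - {u, v}) E \<and>
              (\<forall>C \<in> components (V - {u, v}) E. card C \<ge> g + 1))"
        using \<open>kappa V E = 2\<close> xyV xy dxy by blast
      then show ?R by (rule disjI1)
    next
      case True
      then have k1: "kappa V E = 1" using kf(1) by simp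
      have a: "\<forall>u. cut_vertex V E u \<longrightarrow> (\<exists>C \<in> components (V - {u}) E. card C \<le> g)"
      proof (intro allI impI)
        fix u assume cu: "cut_vertex V E u"
        then have "\<not> (\<forall>C\<in>components (V - {u}) E. card C \<ge> g + 1)" using no1[of u] rg1[of u] by blast
        then obtain C where "C \<in> components (V - {u}) E" "\<not> card C \<ge> g + 1" by blast
        then show "\<exists>C \<in> components (V - {u}) E. card C \<le> g" by (intro bexI[of _ C]) auto
      qed
      have g1: "g \<ge> 1"
      proof (rule ccontr)
        assume "\<not> g \<ge> 1"
        then have "g = 0" by simp
        obtain u where u: "cut_vertex V E u" using True by auto
        have "\<forall>C\<in>components (V - {u}) E. card C \<ge> g + 1" using comp_card[of "V - {u}"] fin \<open>g = 0\<close> by auto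
        then show False using no1 rg1 u by blast
      qed
      have b: "(\<exists>v. cut_vertex V E v \<and> card (components (V - {v}) E) \<ge> 3 \<and>
            (\<exists>C \<in> components (V - {v}) E. card C = 1 \<and>
               (\<forall>C' \<in> components (V - {v}) E. C' \<noteq> C \<longrightarrow> card C' \<ge> g + 1)))
        \<or>
        (\<exists>x y. x \<in> V \<and> y \<in> V \<and> x \<noteq> y \<and> \<not> cut_vertex V E x \<and> \<not> cut_vertex V E y \<and>
               disconnected_on (V - {x, y}) E \<and>
               (\<forall>C \<in> components (V - {x, y}) E. card C \<ge> g + 1))"
      proof (cases "cut_vertex V E x")
        case True
        have "Rg_cutset V E g {x, y}" using S xy by simp
        from pair_cut_case[OF sym fin xyV xy(2) this True no1] True show ?thesis by blast
      next
        case cx: False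
        show ?thesis
        proof (cases "cut_vertex V E y")
          case True
          have "Rg_cutset V E g {y, x}" using S xy by (simp add: insert_commute)
          from pair_cut_case[OF sym fin xyV(2,1) xy(2)[symmetric] this True no1] True show ?thesis by blast
        next
          case False
          then show ?thesis using cx xyV xy dxy by blast
        qed
      qed
      show ?R by (intro disjI2 conjI k1 g1 a b)
    qed
  next
    assume R: ?R
    have ex: "\<exists>S. Rg_cutset V E g S \<and> card S = 2"
    proof -
      { assume "\<exists>u v. u \<in> V \<and> v \<in> V \<and> u \<noteq> v \<and> disconnected_on (V - {u, v}) E \<and>
              (\<forall>C \<in> components (V - {u, v}) E. card C \<ge> g + 1)"
        then obtain u v where "u \<in> V" "v \<in> V" "u \<noteq> v" "disconnected_on (V - {u, v}) E"
            "\<forall>C \<in> components (V - {u, v}) E. card C \<ge> g + 1" by blast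
        then have "Rg_cutset V E g {u, v} \<and> card {u, v} = 2"
          unfolding Rg_cutset_def cutset_def by auto
        then have ?thesis by blast }
      moreover
      { assume "\<exists>v. cut_vertex V E v \<and> card (components (V - {v}) E) \<ge> 3 \<and>
            (\<exists>C \<in> components (V - {v}) E. card C = 1 \<and>
               (\<forall>C' \<in> components (V - {v}) E. C' \<noteq> C \<longrightarrow> card C' \<ge> g + 1))"
        then obtain v C where v: "cut_vertex V E v" "card (components (V - {v}) E) \<ge> 3"
           "C \<in> components (V - {v}) E" "card C = 1"
           "\<forall>C' \<in> components (V - {v}) E. C' \<noteq> C \<longrightarrow> card C' \<ge> g + 1" by blast
        have ?thesis by (rule leaf_case[OF sym fin v]) }
      ultimately show ?thesis using R by blast
    qed
    have min: "2 \<le> card T" if T: "Rg_cutset V E g T" for T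
    proof (rule ccontr)
      assume "\<not> 2 \<le> card T"
      then have "card T = 0 \<or> card T = 1" by auto
      then show False
      proof
        assume "card T = 0" then show False using rg0 T by blast
      next
        assume "card T = 1"
        then obtain u where u: "T = {u}" using card_1_singletonE by blast
        then have cu: "cut_vertex V E u" "\<forall>C\<in>components (V - {u}) E. card C \<ge> g + 1"
          using T rg1 by auto
        then have "kappa V E = 1" using kf(1) by auto
        then have "kappa V E \<noteq> 2" by simp
        then have "\<forall>u. cut_vertex V E u \<longrightarrow> (\<exists>C \<in> components (V - {u}) E. card C \<le> g)"
          using R by (elim disjE conjE) simp_all
        then show False using cu by fastforce
      qed
    qed
    have "kappa_g V E g = 2"
      unfolding kappa_g_def
    proof (rule Least_equality)
      show "\<exists>S. Rg_cutset V E g S \<and> card S = 2" by fact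
      show "\<And>y. \<exists>S. Rg_cutset V E g S \<and> card S = y \<Longrightarrow> 2 \<le> y" using min by blast
    qed
    then show ?L using ex by blast
  qed
qed

end
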